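(* Let $\mathscr D:\mathscr N=\mathscr N_1\cup\cdots\cup\mathscr N_k$ be a pairwise min-max decomposition of a chemical reaction network $\mathscr N$ such that every linkage class of $\mathscr N$ contains at most one common complex. Then $\mathscr D$ is incidence independent.
   Context: A CRN $\mathscr N=(\mathscr S,\mathscr C,\mathscr R)$ is viewed as a directed graph on its complexes with arcs its reactions; linkage classes are the connected components of the underlying undirected graph. A decomposition $\mathscr N=\mathscr N_1\cup\cdots\cup\mathscr N_k$ ($k\ge2$) is given by a partition $\{\mathscr R_1,\dots,\mathscr R_k\}$ of the reaction set; the subnetwork $\mathscr N_i$ has reactions $\mathscr R_i$ and complex set $\mathscr C_i$ consisting of the complexes occurring in reactions of $\mathscr R_i$. The set $\mathscr C_{\mathscr D}$ of common complexes consists of the complexes lying in the complex sets of at least two distinct subnetworks. The decomposition is pairwise min-max (PMM) if for all $i\ne j$, either $\mathscr C_i\cap\mathscr C_j=\varnothing$ or $\mathscr C_i\cap\mathscr C_j=\mathscr C_{\mathscr D}$. With $n,\ell$ the numbers of complexes and linkage classes of $\mathscr N$ and $n_i,\ell_i$ those of $\mathscr N_i$, the decomposition is incidence independent if the image of the incidence map of $\mathscr N$ (the linear map $\mathbb R^{\mathscr R}\to\mathbb R^{\mathscr C}$ sending a reaction $y\to y'$ to $\omega_{y'}-\omega_y$) is the direct sum of the images of the incidence maps of the $\mathscr N_i$, equivalently $n-\ell=\sum_i(n_i-\ell_i)$. *)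

theory Defs
  imports Complex_Main
begin

text \<open>A chemical reaction network is viewed as a directed graph on its complexes
(of an arbitrary type 'c, e.g. nonnegative integer vectors over the species);
a reaction y \<rightarrow> y' is the pair (y, y'). Only the reaction set is needed:
the complex set consists of the complexes occurring in reactions.\<close>

definition complexes :: "('c \<times> 'c) set \<Rightarrow> 'c set" where
  "complexes R = fst ` R \<union> snd ` R"

definition crn :: "('c \<times> 'c) set \<Rightarrow> bool" where
  "crn R \<longleftrightarrow> finite R \<and> (\<forall>(y, y') \<in> R. y \<noteq> y')"

definition linked :: "('c \<times> 'c) set \<Rightarrow> 'c \<Rightarrow> 'c \<Rightarrow> bool" where
  "linked R x y \<longleftrightarrow> (x, y) \<in> (R \<union> R\<inverse>)\<^sup>*"

definition linkage_classes :: "('c \<times> 'c) set \<Rightarrow> 'c set set" where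
  "linkage_classes R = {{y \<in> complexes R. linked R x y} | x. x \<in> complexes R}"

definition incidence_map :: "('c \<times> 'c) set \<Rightarrow> (('c \<times> 'c) \<Rightarrow> real) \<Rightarrow> 'c \<Rightarrow> real" where
  "incidence_map R a = (\<lambda>c. \<Sum>r\<in>R. a r *
      ((if c = snd r then 1 else 0) - (if c = fst r then 1 else 0)))"

definition incidence_image :: "('c \<times> 'c) set \<Rightarrow> ('c \<Rightarrow> real) set" where
  "incidence_image R = range (incidence_map R)"

definition decomposition :: "('c \<times> 'c) set \<Rightarrow> nat \<Rightarrow> (nat \<Rightarrow> ('c \<times> 'c) set) \<Rightarrow> bool" where
  "decomposition R k Rs \<longleftrightarrow> k \<ge> 2 \<and> (\<forall>i<k. Rs i \<noteq> {}) \<and>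
     (\<Union>i<k. Rs i) = R \<and> (\<forall>i<k. \<forall>j<k. i \<noteq> j \<longrightarrow> Rs i \<inter> Rs j = {})"

definition common_complexes :: "nat \<Rightarrow> (nat \<Rightarrow> ('c \<times> 'c) set) \<Rightarrow> 'c set" where
  "common_complexes k Rs =
     {c. \<exists>i<k. \<exists>j<k. i \<noteq> j \<and> c \<in> complexes (Rs i) \<and> c \<in> complexes (Rs j)}"

definition pmm :: "nat \<Rightarrow> (nat \<Rightarrow> ('c \<times> 'c) set) \<Rightarrow> bool" where
  "pmm k Rs \<longleftrightarrow> (\<forall>i<k. \<forall>j<k. i \<noteq> j \<longrightarrow>
     complexes (Rs i) \<inter> complexes (Rs j) = {} \<or>
     complexes (Rs i) \<inter> complexes (Rs j) = common_complexes k Rs)"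

definition incidence_independent ::
  "('c \<times> 'c) set \<Rightarrow> nat \<Rightarrow> (nat \<Rightarrow> ('c \<times> 'c) set) \<Rightarrow> bool" where
  "incidence_independent R k Rs \<longleftrightarrow>
     incidence_image R =
       {(\<lambda>c. \<Sum>i<k. v i c) | v. \<forall>i<k. v i \<in> incidence_image (Rs i)} \<and>
     (\<forall>v. (\<forall>i<k. v i \<in> incidence_image (Rs i)) \<and> (\<lambda>c. \<Sum>i<k. v i c) = (\<lambda>c. 0)
          \<longrightarrow> (\<forall>i<k. v i = (\<lambda>c. 0)))"

end

theory Submission
  imports Defs
begin

lemma decomp_sum:
  assumes "finite R" "decomposition R k Rs"
  shows "incidence_map R a c = (\<Sum>i<k. incidence_map (Rs i) a c)"
proof -
  have U: "R = (\<Union>i\<in>{..<k}. Rs i)" using assms(2) unfolding decomposition_def by auto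
  have fin: "\<forall>i\<in>{..<k}. finite (Rs i)" using assms U by (metis UN_I finite_subset subsetI)
  have dis: "\<forall>i\<in>{..<k}. \<forall>j\<in>{..<k}. i \<noteq> j \<longrightarrow> Rs i \<inter> Rs j = {}"
    using assms(2) unfolding decomposition_def by auto
  show ?thesis unfolding incidence_map_def
    by (subst U, subst sum.UNION_disjoint[OF _ fin dis]) auto
qed

lemma support:
  assumes "v \<in> incidence_image S" "c \<notin> complexes S"
  shows "v c = 0"
proof -
  obtain a where "v = incidence_map S a" using assms(1) unfolding incidence_image_def by auto
  moreover have "\<forall>r\<in>S. c \<noteq> fst r \<and> c \<noteq> snd r" using assms(2) unfolding complexes_def by force
  ultimately show ?thesis unfolding incidence_map_def by simp
qed

lemma closed_sum:
  assumes "finite S" "finite L" "\<forall>r\<in>S. (fst r \<in> L \<longleftrightarrow> snd r \<in> L)"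
  shows "(\<Sum>c\<in>L. incidence_map S a c) = 0"
proof -
  have "(\<Sum>c\<in>L. incidence_map S a c) = (\<Sum>r\<in>S. \<Sum>c\<in>L. a r *
      ((if c = snd r then 1 else 0) - (if c = fst r then 1 else 0)))"
    unfolding incidence_map_def by (rule sum.swap)
  also have "\<dots> = (\<Sum>r\<in>S. a r * ((\<Sum>c\<in>L. if c = snd r then 1 else 0) - (\<Sum>c\<in>L. if c = fst r then 1 else 0)))"
    by (simp add: sum_distrib_left[symmetric] sum_subtractf)
  also have "\<dots> = 0" using assms(2,3) by (intro sum.neutral) (simp add: sum.delta)
  finally show ?thesis .
qed

theorem proposition6:
  fixes R :: "('c \<times> 'c) set" and k :: nat and Rs :: "nat \<Rightarrow> ('c \<times> 'c) set"
  assumes "crn R"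
    and "decomposition R k Rs"
    and "pmm k Rs"
    and "\<forall>L \<in> linkage_classes R. card (L \<inter> common_complexes k Rs) \<le> 1"
  shows "incidence_independent R k Rs"
proof -
  have finR: "finite R" using assms(1) unfolding crn_def by auto
  have sub: "Rs i \<subseteq> R" if "i < k" for i using assms(2) that unfolding decomposition_def by auto
  have finRs: "finite (Rs i)" if "i < k" for i using sub[OF that] finR finite_subset by auto
  have dis: "Rs i \<inter> Rs j = {}" if "i < k" "j < k" "i \<noteq> j" for i j
    using assms(2) that unfolding decomposition_def by auto
  have csub: "complexes (Rs i) \<subseteq> complexes R" if "i < k" for i
    using sub[OF that] unfolding complexes_def by auto
  have finC: "finite (complexes R)" using finR unfolding complexes_def by auto
  have part1: "incidence_image R =
       {(\<lambda>c. \<Sum>i<k. v i c) | v. \<forall>i<k. v i \<in> incidence_image (Rs i)}"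
  proof (intro equalityI subsetI)
    fix w assume "w \<in> incidence_image R"
    then obtain a where w: "w = incidence_map R a" unfolding incidence_image_def by auto
    show "w \<in> {(\<lambda>c. \<Sum>i<k. v i c) | v. \<forall>i<k. v i \<in> incidence_image (Rs i)}"
      using decomp_sum[OF finR assms(2)] w unfolding incidence_image_def
      by (intro CollectI exI[of _ "\<lambda>i. incidence_map (Rs i) a"]) auto
  next
    fix w assume "w \<in> {(\<lambda>c. \<Sum>i<k. v i c) | v. \<forall>i<k. v i \<in> incidence_image (Rs i)}"
    then obtain v where w: "w = (\<lambda>c. \<Sum>i<k. v i c)" and v: "\<forall>i<k. v i \<in> incidence_image (Rs i)"
      by auto
    have "\<forall>i. \<exists>b. i < k \<longrightarrow> v i = incidence_map (Rs i) b"
      using v unfolding incidence_image_def by auto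
    then obtain b where b: "\<And>i. i < k \<Longrightarrow> v i = incidence_map (Rs i) (b i)" by metis
    define a where "a = (\<lambda>r. \<Sum>i<k. if r \<in> Rs i then b i r else 0)"
    have ab: "a r = b i r" if "i < k" "r \<in> Rs i" for i r
    proof -
      have "a r = (\<Sum>j\<in>{i}. if r \<in> Rs j then b j r else 0)"
        unfolding a_def using that dis by (intro sum.mono_neutral_right) auto
      then show ?thesis using that by simp
    qed
    have "incidence_map (Rs i) a = v i" if "i < k" for i
      unfolding b[OF that] incidence_map_def using ab[OF that]
      by (intro ext sum.cong) auto
    then have "w = incidence_map R a"
      using decomp_sum[OF finR assms(2)] w by auto
    then show "w \<in> incidence_image R" unfolding incidence_image_def by auto
  qed
  have part2: "\<forall>i<k. v i = (\<lambda>c. 0)"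
    if v: "\<forall>i<k. v i \<in> incidence_image (Rs i)" and s: "(\<lambda>c. \<Sum>i<k. v i c) = (\<lambda>c. 0)" for v
  proof -
    have nc: "v i c = 0" if "i < k" "c \<notin> common_complexes k Rs" for i c
    proof (cases "c \<in> complexes (Rs i)")
      case False then show ?thesis using support[of "v i" "Rs i" c] v that by auto
    next
      case True
      have o: "v j c = 0" if "j < k" "j \<noteq> i" for j
      proof -
        have "c \<notin> complexes (Rs j)"
        proof
          assume "c \<in> complexes (Rs j)"
          then have "c \<in> common_complexes k Rs" unfolding common_complexes_def
            using True `i < k` that by (intro CollectI exI[of _ i] conjI exI[of _ j]) auto
          then show False using `c \<notin> common_complexes k Rs` by simp
        qed
        then show ?thesis using support[of "v j" "Rs j" c] v that by simp
      qed
      have "0 = (\<Sum>j<k. v j c)" using s by metis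
      also have "\<dots> = (\<Sum>j\<in>{i}. v j c)" using o `i<k` by (intro sum.mono_neutral_right) auto
      finally show ?thesis by simp
    qed
    show ?thesis
    proof (intro allI impI ext)
      fix i c assume ik: "i < k"
      show "v i c = 0"
      proof (cases "c \<in> common_complexes k Rs")
        case False then show ?thesis using nc ik by auto
      next
        case True
        show ?thesis
        proof (cases "c \<in> complexes (Rs i)")
          case False then show ?thesis using support[of "v i" "Rs i" c] v ik by simp
        next
          case True
          have cR: "c \<in> complexes R" using True csub ik by auto
          define L where "L = {y \<in> complexes R. linked R c y}"
          have "L \<in> linkage_classes R" unfolding L_def linkage_classes_def using cR by auto
          then have cd: "card (L \<inter> common_complexes k Rs) \<le> 1" using assms(4) by auto
          have cL: "c \<in> L" unfolding L_def linked_def using cR by auto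
          have finL: "finite L" unfolding L_def using finC by auto
          have only: "y = c" if "y \<in> L" "y \<in> common_complexes k Rs" for y
          proof (rule ccontr)
            assume "y \<noteq> c"
            then have "{y, c} \<subseteq> L \<inter> common_complexes k Rs"
              using that cL `c \<in> common_complexes k Rs` by auto
            then have "card {y, c} \<le> card (L \<inter> common_complexes k Rs)"
              using finL by (intro card_mono) auto
            then show False using cd `y \<noteq> c` by auto
          qed
          have closed: "\<forall>r\<in>Rs i. (fst r \<in> L \<longleftrightarrow> snd r \<in> L)"
          proof
            fix r assume r: "r \<in> Rs i"
            then have rR: "r \<in> R" using sub ik by auto
            then have inC: "fst r \<in> complexes R" "snd r \<in> complexes R"
              unfolding complexes_def by auto
            have that_facts: "(fst r, snd r) \<in> (R \<union> R\<inverse>)\<^sup>*" "(snd r, fst r) \<in> (R \<union> R\<inverse>)\<^sup>*"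
              using rR by (auto intro!: r_into_rtrancl)
            have "(c, fst r) \<in> (R \<union> R\<inverse>)\<^sup>* \<longleftrightarrow> (c, snd r) \<in> (R \<union> R\<inverse>)\<^sup>*"
              using rtrancl_trans[of c "fst r" _ "snd r"] rtrancl_trans[of c "snd r" _ "fst r"] that_facts by blast
            then show "(fst r \<in> L \<longleftrightarrow> snd r \<in> L)"
              unfolding L_def linked_def using inC by simp
          qed
          obtain a where a: "v i = incidence_map (Rs i) a"
            using v ik unfolding incidence_image_def by auto
          have "0 = (\<Sum>y\<in>L. v i y)" using closed_sum[OF finRs[OF ik] finL closed] a by simp
          also have "\<dots> = (\<Sum>y\<in>{c}. v i y)"
            using nc ik only cL by (intro sum.mono_neutral_right[OF finL]) auto
          finally show ?thesis by simp
        qed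
      qed
    qed
  qed
  show ?thesis unfolding incidence_independent_def using part1 part2 by blast
qed

end
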